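(* Modularity is rich: for every finite set $V$ with $|V|\ge 2$ and every partition $C^*$ of $V$, there exist edge weights $E$ such that, for the graph $G=(V,E)$, the modularity $Q_{\mathrm{mod}}(G,C)$ is defined for every clustering $C$ of $G$ and $C^*$ is the unique clustering of $G$ maximizing $Q_{\mathrm{mod}}(G,\cdot)$.
   Context: A (symmetric weighted) graph is a pair $G=(V,E)$ of a finite set $V$ of nodes and a function $E:V\times V\to\mathbb{R}_{\ge 0}$ with $E(i,j)=E(j,i)$; self loops ($E(i,i)>0$) are allowed. A clustering of $G$ is a partition of $V$ into nonempty, pairwise disjoint sets (clusters). For $c\subseteq V$ define the volume $v_c=\sum_{i\in c}\sum_{j\in V}E(i,j)$ and the within-cluster weight $w_c=\sum_{i\in c}\sum_{j\in c}E(i,j)$; $v_V$ is the volume of the whole graph. Modularity is $Q_{\mathrm{mod}}(G,C)=\sum_{c\in C}\left(\frac{w_c}{v_V}-\left(\frac{v_c}{v_V}\right)^2\right)$, defined when $v_V>0$. *)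

theory Defs
  imports Main "HOL-Analysis.Analysis"
begin

definition is_graph :: "'a set \<Rightarrow> ('a \<Rightarrow> 'a \<Rightarrow> real) \<Rightarrow> bool" where
  "is_graph V E \<longleftrightarrow> finite V \<and> (\<forall>i\<in>V. \<forall>j\<in>V. E i j \<ge> 0 \<and> E i j = E j i)"

definition is_clustering :: "'a set \<Rightarrow> 'a set set \<Rightarrow> bool" where
  "is_clustering V C \<longleftrightarrow> \<Union>C = V \<and> (\<forall>c\<in>C. c \<noteq> {}) \<and>
     (\<forall>c\<in>C. \<forall>d\<in>C. c \<noteq> d \<longrightarrow> c \<inter> d = {})"

definition graph_volume :: "'a set \<Rightarrow> ('a \<Rightarrow> 'a \<Rightarrow> real) \<Rightarrow> 'a set \<Rightarrow> real" where
  "graph_volume V E c = (\<Sum>i\<in>c. \<Sum>j\<in>V. E i j)"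

definition within_weight :: "('a \<Rightarrow> 'a \<Rightarrow> real) \<Rightarrow> 'a set \<Rightarrow> real" where
  "within_weight E c = (\<Sum>i\<in>c. \<Sum>j\<in>c. E i j)"

text \<open>Modularity (meaningful only when graph_volume V E V > 0).\<close>
definition modularity :: "'a set \<Rightarrow> ('a \<Rightarrow> 'a \<Rightarrow> real) \<Rightarrow> 'a set set \<Rightarrow> real" where
  "modularity V E C = (\<Sum>c\<in>C. within_weight E c / graph_volume V E V - (graph_volume V E c / graph_volume V E V)^2)"

end

theory Submission
  imports Defs
begin

lemma clust_same:
  assumes "is_clustering V C" "c \<in> C" "c' \<in> C" "x \<in> c" "x \<in> c'"
  shows "c = c'"
  using assms unfolding is_clustering_def by blast

lemma mod_expand:
  assumes fin: "finite V" and cl: "is_clustering V C"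
  shows "modularity V E C = (\<Sum>i\<in>V. \<Sum>j\<in>V. if (\<exists>c\<in>C. i\<in>c \<and> j\<in>c) then
      E i j / graph_volume V E V - (\<Sum>k\<in>V. E i k) * (\<Sum>k\<in>V. E j k) / (graph_volume V E V)^2 else 0)"
proof -
  define m where "m = graph_volume V E V"
  define d where "d i = (\<Sum>k\<in>V. E i k)" for i
  define B where "B i j = E i j / m - d i * d j / m^2" for i j
  define F where "F i = (\<Sum>j\<in>V. if (\<exists>c\<in>C. i\<in>c \<and> j\<in>c) then B i j else 0)" for i
  have sub: "c \<subseteq> V" if "c \<in> C" for c using cl that unfolding is_clustering_def by blast
  have finc: "finite c" if "c \<in> C" for c using sub[OF that] fin finite_subset by blast
  have hterm: "within_weight E c / m - (graph_volume V E c / m)^2 = sum F c" if cC: "c \<in> C" for c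
  proof -
    have v: "graph_volume V E c = (\<Sum>i\<in>c. d i)" unfolding graph_volume_def d_def ..
    have sq: "(\<Sum>i\<in>c. d i)^2 = (\<Sum>i\<in>c. \<Sum>j\<in>c. d i * d j)"
      by (simp add: power2_eq_square sum_product)
    have "within_weight E c / m - (graph_volume V E c / m)^2
        = (\<Sum>i\<in>c. \<Sum>j\<in>c. E i j) / m - (\<Sum>i\<in>c. \<Sum>j\<in>c. d i * d j) / m^2"
      unfolding within_weight_def v power_divide sq ..
    also have "\<dots> = (\<Sum>i\<in>c. \<Sum>j\<in>c. B i j)"
      unfolding B_def by (simp only: sum_subtractf sum_divide_distrib)
    also have "\<dots> = sum F c"
    proof (rule sum.cong[OF refl])
      fix i assume ic: "i \<in> c"
      have "(\<Sum>j\<in>c. B i j) = (\<Sum>j\<in>V \<inter> c. B i j)" using sub[OF cC] by (metis Int_absorb1)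
      also have "\<dots> = (\<Sum>j\<in>V. if j \<in> c then B i j else 0)" using fin by (rule sum.inter_restrict)
      also have "\<dots> = F i" unfolding F_def
      proof (rule sum.cong[OF refl])
        fix j assume "j \<in> V"
        have "(j \<in> c) = (\<exists>c'\<in>C. i\<in>c' \<and> j\<in>c')"
        proof
          assume "j \<in> c" then show "\<exists>c'\<in>C. i\<in>c' \<and> j\<in>c'" using cC ic by blast
        next
          assume "\<exists>c'\<in>C. i\<in>c' \<and> j\<in>c'"
          then obtain c' where c'C: "c' \<in> C" and "i \<in> c'" "j \<in> c'" by blast
          then have "c' = c" using clust_same[OF cl c'C cC _ ic] by blast
          then show "j \<in> c" using \<open>j \<in> c'\<close> by simp
        qed
        then show "(if j \<in> c then B i j else 0) = (if (\<exists>c\<in>C. i\<in>c \<and> j\<in>c) then B i j else 0)"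
          by simp
      qed
      finally show "(\<Sum>j\<in>c. B i j) = F i" .
    qed
    finally show ?thesis .
  qed
  have "modularity V E C = (\<Sum>c\<in>C. sum F c)"
    unfolding modularity_def m_def[symmetric] using hterm by (rule sum.cong[OF refl])
  also have "\<dots> = sum F (\<Union>C)"
  proof -
    have "\<forall>A\<in>C. finite A" using finc by blast
    moreover have "\<forall>A\<in>C. \<forall>B\<in>C. A \<noteq> B \<longrightarrow> A \<inter> B = {}" using cl unfolding is_clustering_def by (elim conjE) assumption
    ultimately have "sum F (\<Union>C) = (sum \<circ> sum) F C" by (rule sum.Union_disjoint)
    then show ?thesis unfolding comp_apply by (rule sym)
  qed
  also have "\<dots> = sum F V" using cl unfolding is_clustering_def by (simp only:)
  finally have "modularity V E C = sum F V" .
  then show ?thesis by (simp only: F_def[abs_def] B_def[abs_def] d_def[abs_def] m_def)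
qed

lemma clust_eq:
  assumes cl1: "is_clustering V C" and cl2: "is_clustering V D"
    and r: "\<And>i j. i \<in> V \<Longrightarrow> j \<in> V \<Longrightarrow> (\<exists>c\<in>C. i\<in>c \<and> j\<in>c) = (\<exists>c\<in>D. i\<in>c \<and> j\<in>c)"
  shows "C \<subseteq> D"
proof
  fix c assume cC: "c \<in> C"
  then obtain i where ic: "i \<in> c" using cl1 unfolding is_clustering_def by blast
  have iV: "i \<in> V" using cC ic cl1 unfolding is_clustering_def by blast
  then obtain a where aD: "a \<in> D" and ia: "i \<in> a" using cl2 unfolding is_clustering_def by blast
  have "c = a"
  proof
    show "c \<subseteq> a"
    proof
      fix x assume xc: "x \<in> c"
      have xV: "x \<in> V" using cC xc cl1 unfolding is_clustering_def by blast
      have "\<exists>c\<in>D. i\<in>c \<and> x\<in>c" using r[OF iV xV] cC ic xc by blast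
      then obtain a' where "a' \<in> D" "i \<in> a'" "x \<in> a'" by blast
      with clust_same[OF cl2 aD _ ia] show "x \<in> a" by blast
    qed
    show "a \<subseteq> c"
    proof
      fix x assume xa: "x \<in> a"
      have xV: "x \<in> V" using aD xa cl2 unfolding is_clustering_def by blast
      have "\<exists>c\<in>C. i\<in>c \<and> x\<in>c" using r[OF iV xV] aD ia xa by blast
      then obtain a' where "a' \<in> C" "i \<in> a'" "x \<in> a'" by blast
      with clust_same[OF cl1 cC _ ic] show "x \<in> c" by blast
    qed
  qed
  with aD show "c \<in> D" by simp
qed


lemma key:
  fixes B :: "'a \<Rightarrow> 'a \<Rightarrow> real"
  assumes fin: "finite V" and cl: "is_clustering V C" and cls: "is_clustering V Cs" and ne: "C \<noteq> Cs"
    and pos: "\<And>i j. i \<in> V \<Longrightarrow> j \<in> V \<Longrightarrow> i \<noteq> j \<Longrightarrow> (\<exists>c\<in>Cs. i\<in>c \<and> j\<in>c) \<Longrightarrow> B i j > 0"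
    and neg: "\<And>i j. i \<in> V \<Longrightarrow> j \<in> V \<Longrightarrow> \<not>(\<exists>c\<in>Cs. i\<in>c \<and> j\<in>c) \<Longrightarrow> B i j < 0"
  shows "(\<Sum>i\<in>V. \<Sum>j\<in>V. if (\<exists>c\<in>C. i\<in>c \<and> j\<in>c) then B i j else 0)
       < (\<Sum>i\<in>V. \<Sum>j\<in>V. if (\<exists>c\<in>Cs. i\<in>c \<and> j\<in>c) then B i j else 0)"
proof -
  define f where "f i j = (if (\<exists>c\<in>C. i\<in>c \<and> j\<in>c) then B i j else 0)" for i j
  define g where "g i j = (if (\<exists>c\<in>Cs. i\<in>c \<and> j\<in>c) then B i j else 0)" for i j
  have refl: "\<exists>c\<in>C. i\<in>c \<and> i\<in>c" if "i \<in> V" for i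
    using cl that unfolding is_clustering_def by blast
  have le: "f i j \<le> g i j" if iV: "i \<in> V" and jV: "j \<in> V" for i j
  proof (cases "\<exists>c\<in>Cs. i\<in>c \<and> j\<in>c")
    case True
    show ?thesis
    proof (cases "\<exists>c\<in>C. i\<in>c \<and> j\<in>c")
      case False
      then have "i \<noteq> j" using refl[OF iV] by blast
      then have "B i j > 0" using pos[OF iV jV _ True] by blast
      then show ?thesis using False True unfolding f_def g_def by simp
    qed (simp add: f_def g_def True)
  next
    case False
    then have "B i j < 0" using neg[OF iV jV] by blast
    then show ?thesis using False unfolding f_def g_def by simp
  qed
  have lt: "f i j < g i j" if iV: "i \<in> V" and jV: "j \<in> V"
     and d: "(\<exists>c\<in>C. i\<in>c \<and> j\<in>c) \<noteq> (\<exists>c\<in>Cs. i\<in>c \<and> j\<in>c)" for i j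
  proof (cases "\<exists>c\<in>Cs. i\<in>c \<and> j\<in>c")
    case True
    with d have F: "\<not>(\<exists>c\<in>C. i\<in>c \<and> j\<in>c)" by blast
    then have "i \<noteq> j" using refl[OF iV] by blast
    then have "B i j > 0" using pos[OF iV jV _ True] by blast
    then show ?thesis using F True unfolding f_def g_def by simp
  next
    case False
    with d have T: "\<exists>c\<in>C. i\<in>c \<and> j\<in>c" by blast
    have "B i j < 0" using neg[OF iV jV False] .
    then show ?thesis using False T unfolding f_def g_def by simp
  qed
  have "\<exists>i\<in>V. \<exists>j\<in>V. (\<exists>c\<in>C. i\<in>c \<and> j\<in>c) \<noteq> (\<exists>c\<in>Cs. i\<in>c \<and> j\<in>c)"
  proof (rule ccontr)
    assume "\<not> ?thesis"
    then have r: "\<And>i j. i \<in> V \<Longrightarrow> j \<in> V \<Longrightarrow> (\<exists>c\<in>C. i\<in>c \<and> j\<in>c) = (\<exists>c\<in>Cs. i\<in>c \<and> j\<in>c)" by blast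
    have c1: "C \<subseteq> Cs" using clust_eq[OF cl cls r] .
    have r2: "\<And>i j. i \<in> V \<Longrightarrow> j \<in> V \<Longrightarrow> (\<exists>c\<in>Cs. i\<in>c \<and> j\<in>c) = (\<exists>c\<in>C. i\<in>c \<and> j\<in>c)"
      using r by (rule sym)
    have c2: "Cs \<subseteq> C" using clust_eq[OF cls cl r2] .
    show False using c1 c2 ne by blast
  qed
  then obtain i0 j0 where i0: "i0 \<in> V" and j0: "j0 \<in> V"
    and d0: "(\<exists>c\<in>C. i0\<in>c \<and> j0\<in>c) \<noteq> (\<exists>c\<in>Cs. i0\<in>c \<and> j0\<in>c)" by blast
  have "(\<Sum>i\<in>V. \<Sum>j\<in>V. f i j) < (\<Sum>i\<in>V. \<Sum>j\<in>V. g i j)"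
  proof (rule sum_strict_mono_ex1[OF fin])
    show "\<forall>i\<in>V. (\<Sum>j\<in>V. f i j) \<le> (\<Sum>j\<in>V. g i j)"
    proof
      fix i assume iV: "i \<in> V"
      show "(\<Sum>j\<in>V. f i j) \<le> (\<Sum>j\<in>V. g i j)" by (rule sum_mono) (rule le[OF iV])
    qed
    have "(\<Sum>j\<in>V. f i0 j) < (\<Sum>j\<in>V. g i0 j)"
    proof (rule sum_strict_mono_ex1[OF fin])
      show "\<forall>j\<in>V. f i0 j \<le> g i0 j" using le[OF i0] by blast
      show "\<exists>j\<in>V. f i0 j < g i0 j" using lt[OF i0 j0 d0] j0 by blast
    qed
    then show "\<exists>i\<in>V. (\<Sum>j\<in>V. f i j) < (\<Sum>j\<in>V. g i j)" using i0 by blast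
  qed
  then show ?thesis unfolding f_def g_def .
qed

theorem theorem1:
  fixes V :: "'a set" and Cstar :: "'a set set"
  assumes "finite V" and "card V \<ge> 2" and "is_clustering V Cstar"
  shows "\<exists>E. is_graph V E \<and> graph_volume V E V > 0 \<and>
           (\<forall>C. is_clustering V C \<and> C \<noteq> Cstar \<longrightarrow> modularity V E C < modularity V E Cstar)"
proof -
  note fin = assms(1) and cls = assms(3)
  define E :: "'a \<Rightarrow> 'a \<Rightarrow> real" where
    "E i j = (if \<exists>a\<in>Cstar. i\<in>a \<and> j\<in>a \<and> (i \<noteq> j \<or> card a = 1) then 1 else 0)" for i j
  define d where "d i = (\<Sum>k\<in>V. E i k)" for i
  define m where "m = graph_volume V E V"
  have m_eq: "m = (\<Sum>i\<in>V. d i)" unfolding m_def d_def graph_volume_def ..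
  have sub: "a \<subseteq> V" if "a \<in> Cstar" for a using cls that unfolding is_clustering_def by blast
  have fina: "finite a" if "a \<in> Cstar" for a using sub[OF that] fin finite_subset by blast
  have Enn: "E i j \<ge> 0" for i j unfolding E_def by simp
  have Esym: "E i j = E j i" for i j
  proof -
    have "(\<exists>a\<in>Cstar. i\<in>a \<and> j\<in>a \<and> (i \<noteq> j \<or> card a = 1)) = (\<exists>a\<in>Cstar. j\<in>a \<and> i\<in>a \<and> (j \<noteq> i \<or> card a = 1))" by blast
    then show ?thesis unfolding E_def by simp
  qed
  have graph: "is_graph V E" unfolding is_graph_def using fin Enn Esym by blast
  have dnn: "d i \<ge> 0" for i unfolding d_def using Enn by (simp add: sum_nonneg)
  have dpos: "d i \<ge> 1" if iV: "i \<in> V" for i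
  proof -
    obtain a where aC: "a \<in> Cstar" and ia: "i \<in> a" using cls iV unfolding is_clustering_def by blast
    have "\<exists>j\<in>V. E i j = 1"
    proof (cases "card a = 1")
      case True
      then have "E i i = 1" unfolding E_def using aC ia by auto
      then show ?thesis using iV by blast
    next
      case False
      have "a \<noteq> {i}" using False by auto
      then obtain j where "j \<in> a" "j \<noteq> i" using ia by blast
      then have "E i j = 1" "j \<in> V" unfolding E_def using aC ia sub[OF aC] by auto
      then show ?thesis by blast
    qed
    then obtain j where jV: "j \<in> V" and ej: "E i j = 1" by blast
    have "E i j \<le> d i" unfolding d_def by (rule member_le_sum[OF jV]) (use Enn fin in auto)
    then show ?thesis using ej by simp
  qed
  obtain i0 where i0: "i0 \<in> V" using assms(2) by fastforce
  have mpos: "m > 0"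
  proof -
    have "d i0 \<le> m" unfolding m_eq by (rule member_le_sum[OF i0]) (use dnn fin in auto)
    then show ?thesis using dpos[OF i0] by simp
  qed
  have neg: "E i j / m - d i * d j / m^2 < 0"
    if iV: "i \<in> V" and jV: "j \<in> V" and ns: "\<not>(\<exists>c\<in>Cstar. i\<in>c \<and> j\<in>c)" for i j
  proof -
    have "E i j = 0" unfolding E_def using ns by auto
    moreover have "d i * d j > 0" using dpos[OF iV] dpos[OF jV] by simp
    ultimately show ?thesis using mpos by simp
  qed
  have pos: "E i j / m - d i * d j / m^2 > 0"
    if iV: "i \<in> V" and jV: "j \<in> V" and ij: "i \<noteq> j" and ss: "\<exists>c\<in>Cstar. i\<in>c \<and> j\<in>c" for i j
  proof -
    obtain a where aC: "a \<in> Cstar" and ia: "i \<in> a" and ja: "j \<in> a" using ss by blast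
    have "card {i, j} \<le> card a" using fina[OF aC] ia ja by (intro card_mono) auto
    then have ca: "card a \<ge> 2" using ij by simp
    have Eij: "E i j = 1" unfolding E_def using aC ia ja ij by auto
    have dl: "d l = real (card a) - 1" if la: "l \<in> a" for l
    proof -
      have "E l k = (if k \<in> a - {l} then 1 else 0)" for k
      proof (cases "k \<in> a - {l}")
        case True
        then show ?thesis unfolding E_def using aC la by auto
      next
        case False
        have "\<not>(\<exists>a'\<in>Cstar. l\<in>a' \<and> k\<in>a' \<and> (l \<noteq> k \<or> card a' = 1))"
        proof
          assume "\<exists>a'\<in>Cstar. l\<in>a' \<and> k\<in>a' \<and> (l \<noteq> k \<or> card a' = 1)"
          then obtain a' where a'C: "a' \<in> Cstar" and "l \<in> a'" and ka: "k \<in> a'" and o: "l \<noteq> k \<or> card a' = 1" by blast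
          then have "a' = a" using clust_same[OF cls a'C aC _ la] by blast
          then show False using False ka o ca by auto
        qed
        then show ?thesis unfolding E_def using False by simp
      qed
      then have "d l = (\<Sum>k\<in>V. if k \<in> a - {l} then 1 else 0)" unfolding d_def by simp
      also have "\<dots> = (\<Sum>k\<in>V \<inter> (a - {l}). 1)" using fin by (rule sum.inter_restrict[symmetric])
      also have "V \<inter> (a - {l}) = a - {l}" using sub[OF aC] by blast
      also have "(\<Sum>k\<in>a - {l}. (1::real)) = real (card (a - {l}))" by simp
      also have "card (a - {l}) = card a - 1" using la by (simp add: card_Diff_singleton)
      finally show ?thesis using ca by (simp add: of_nat_diff)
    qed
    define K where "K = real (card a)"
    have K2: "K \<ge> 2" unfolding K_def using ca by simp
    have "(\<Sum>l\<in>a. d l) \<le> m" unfolding m_eq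
      by (rule sum_mono2[OF fin sub[OF aC]]) (use dnn in auto)
    moreover have "(\<Sum>l\<in>a. d l) = K * (K - 1)" using dl unfolding K_def by simp
    ultimately have mK: "K * (K - 1) \<le> m" by simp
    have "(K - 1)^2 < m" using mK K2 by (simp add: power2_eq_square algebra_simps)
    then have "(K - 1)^2 / m^2 < m / m^2" using mpos by (intro divide_strict_right_mono) auto
    also have "m / m^2 = 1 / m" using mpos by (simp add: power2_eq_square)
    finally have "(K - 1)^2 / m^2 < 1 / m" .
    moreover have "d i * d j = (K - 1)^2" using dl[OF ia] dl[OF ja] unfolding K_def by (simp add: power2_eq_square)
    ultimately show ?thesis using Eij by simp
  qed
  have "modularity V E C < modularity V E Cstar" if cl: "is_clustering V C" and ne: "C \<noteq> Cstar" for C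
  proof -
    have g1: "graph_volume V E V = m" unfolding m_def ..
    show ?thesis
      unfolding mod_expand[OF fin cl] mod_expand[OF fin cls] g1
      by (rule key[OF fin cl cls ne]) (use pos neg in \<open>auto simp: d_def\<close>)
  qed
  then show ?thesis using graph mpos unfolding m_def by blast
qed

end
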